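(* Let $K\in\mathbb{K}$ and $E\in\mathbb{M}^{N_s}_{k\times d}$. Then the Hessian quadratic form of $C$ at $K$ in direction $E$, $\nabla^2C(K)[E,E]=\frac{d^2}{ds^2}\big|_{s=0}C(K+sE)$, is $$\nabla^2C(K)[E,E]=2\big\langle (R+B^T\mathcal{E}(P^K)B)E\mathbf{X}^K,\,E\big\rangle-4\big\langle B^T\mathcal{E}\big((P^K)'[E]\big)\Gamma\mathbf{X}^K,\,E\big\rangle,$$ where $\Gamma=(A_1-B_1K_1,\dots,A_{N_s}-B_{N_s}K_{N_s})$ and $$(P^K)'[E]=\sum_{t=0}^\infty\mathcal{L}^t\big(E^TL^K+(L^K)^TE\big).$$ (All products, transposes and $\mathcal{E}$ act componentwise on tuples.)
   Context: Let $N_s\ge 1$ and $\Omega=\{1,\dots,N_s\}$. $\mathbb{M}^{N_s}_{n\times m}$ denotes the space of $N_s$-tuples $V=(V_1,\dots,V_{N_s})$ of real $n\times m$ matrices; operations on tuples are componentwise ($V+S$, $VS=(V_1S_1,\dots,V_{N_s}S_{N_s})$, $V^T$), and $\langle V,S\rangle=\sum_i\mathrm{tr}(V_i^TS_i)$. Markovian jump linear system: $x_{t+1}=A_{\omega(t)}x_t+B_{\omega(t)}u_t$ with $A_i\in\mathbb{R}^{d\times d}$, $B_i\in\mathbb{R}^{d\times k}$, $A=(A_i)$, $B=(B_i)$; $\{\omega(t)\}$ is a time-homogeneous Markov chain on $\Omega$ with transition probabilities $p_{ij}$ and initial distribution $\pi$ with $\pi_i>0$; $x_0$ is random, independent of the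 chain, with $\mathbb{E}[x_0x_0^T]\succ0$. The system is mean-square stabilizable. $Q=(Q_i)\succ0$, $R=(R_i)\succ0$. For $K\in\mathbb{M}^{N_s}_{k\times d}$, $u_t=-K_{\omega(t)}x_t$ and $C(K)=\mathbb{E}[\sum_{t\ge0}x_t^TQ_{\omega(t)}x_t+u_t^TR_{\omega(t)}u_t]$. $\mathbb{K}$ is the set of $K$ making the closed loop $x_{t+1}=\Gamma_{\omega(t)}x_t$, $\Gamma_i=A_i-B_iK_i$, mean-square stable (equivalently $C(K)<\infty$). Operators: $\mathcal{E}_i(V)=\sum_jp_{ij}V_j$, $\mathcal{E}(V)=(\mathcal{E}_i(V))_i$; $\mathcal{L}_i(V)=\Gamma_i^T\mathcal{E}_i(V)\Gamma_i$; $\mathcal{T}_j(V)=\sum_ip_{ij}\Gamma_iV_i\Gamma_i^T$. For $K\in\mathbb{K}$, $P^K$ solves $P_i^K=Q_i+K_i^TR_iK_i+\Gamma_i^T\mathcal{E}_i(P^K)\Gamma_i$; $L_i^K=(R_i+B_i^T\mathcal{E}_i(P^K)B_i)K_i-B_i^T\mathcal{E}_i(P^K)A_i$, $L^K=(L_i^K)_i$; $X_i(0)=\mathbb{E}[x_0x_0^T\mathbf{1}\{\omega(0)=i\}]$ and $\mathbf{X}^K=\sum_{t\ge0}\mathcal{T}^t(X(0))$. *)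

theory Defs
  imports "HOL-Analysis.Analysis"
begin

text \<open>Modes are the elements of a finite type 's (Omega = UNIV :: 's set).
  An N_s-tuple of n x m real matrices is an element of real^'m^'n^'s (component V $ i). The transition probabilities are p i j, initial distribution ppi,
  and S0 = E[x0 x0^T].\<close>

definition posdef :: "real^'n^'n \<Rightarrow> bool" where
  "posdef M \<longleftrightarrow> transpose M = M \<and> (\<forall>x. x \<noteq> 0 \<longrightarrow> x \<bullet> (M *v x) > 0)"

definition stochastic_matrix :: "('s::finite \<Rightarrow> 's \<Rightarrow> real) \<Rightarrow> bool" where
  "stochastic_matrix p \<longleftrightarrow> (\<forall>i j. p i j \<ge> 0) \<and> (\<forall>i. (\<Sum>j\<in>UNIV. p i j) = 1)"

definition prob_vector :: "('s::finite \<Rightarrow> real) \<Rightarrow> bool" where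
  "prob_vector mu \<longleftrightarrow> (\<forall>i. mu i \<ge> 0) \<and> (\<Sum>i\<in>UNIV. mu i) = 1"

definition tmul :: "'a::semiring_1^'n^'m^'s \<Rightarrow> 'a^'p^'n^'s \<Rightarrow> 'a^'p^'m^'s" where
  "tmul V S = (\<chi> i. V$i ** S$i)"

definition ttrans :: "'a^'n^'m^'s \<Rightarrow> 'a^'m^'n^'s" where
  "ttrans V = (\<chi> i. transpose (V$i))"

definition tinner :: "real^'n^'m^'s::finite \<Rightarrow> real^'n^'m^'s \<Rightarrow> real" where
  "tinner V S = (\<Sum>i\<in>UNIV. trace (transpose (V$i) ** S$i))"

definition gam :: "real^'d^'d^'s \<Rightarrow> real^'k^'d^'s \<Rightarrow> real^'d^'k^'s \<Rightarrow> real^'d^'d^'s" where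
  "gam A B K = (\<chi> i. A$i - B$i ** K$i)"

text \<open>Mode paths [w_0, ..., w_t], their probabilities, and the state transition matrix
  Phi with x_t = Gamma_{w_(t-1)} ... Gamma_{w_0} x_0.\<close>
definition paths :: "nat \<Rightarrow> 's list set" where
  "paths t = {ws. length ws = Suc t}"

fun chain_prob :: "('s \<Rightarrow> 's \<Rightarrow> real) \<Rightarrow> 's list \<Rightarrow> real" where
  "chain_prob p (w # w' # ws) = p w w' * chain_prob p (w' # ws)"
| "chain_prob p _ = 1"

definition path_prob :: "('s \<Rightarrow> real) \<Rightarrow> ('s \<Rightarrow> 's \<Rightarrow> real) \<Rightarrow> 's list \<Rightarrow> real" where
  "path_prob mu p ws = mu (hd ws) * chain_prob p ws"

fun stm :: "real^'d^'d^'s \<Rightarrow> 's list \<Rightarrow> real^'d^'d" where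
  "stm G (w # w' # ws) = stm G (w' # ws) ** G$w"
| "stm G _ = mat 1"

definition ms_stable :: "('s::finite \<Rightarrow> 's \<Rightarrow> real) \<Rightarrow> real^'d^'d^'s \<Rightarrow> bool" where
  "ms_stable p G \<longleftrightarrow> (\<forall>mu (x0::real^'d). prob_vector mu \<longrightarrow>
     (\<lambda>t. \<Sum>ws\<in>paths t. path_prob mu p ws * (norm (stm G ws *v x0))\<^sup>2) \<longlonglongrightarrow> 0)"

definition Kset :: "('s::finite \<Rightarrow> 's \<Rightarrow> real) \<Rightarrow> real^'d^'d^'s \<Rightarrow> real^'k^'d^'s
     \<Rightarrow> (real^'d^'k^'s) set" where
  "Kset p A B = {K. ms_stable p (gam A B K)}"

text \<open>Cost C(K) = E[sum_t x_t^T Q x_t + u_t^T R u_t], written out: for a fixed mode path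
  the conditional expectation of x_t^T M x_t equals trace (M Phi S0 Phi^T) since x0 is
  independent of the chain. (Finite exactly for K in Kset; there it is this series.)\<close>
definition stage_cost :: "('s::finite \<Rightarrow> real) \<Rightarrow> ('s \<Rightarrow> 's \<Rightarrow> real) \<Rightarrow> real^'d^'d \<Rightarrow>
     real^'d^'d^'s \<Rightarrow> real^'k^'d^'s \<Rightarrow> real^'d^'d^'s \<Rightarrow> real^'k^'k^'s \<Rightarrow> real^'d^'k^'s
     \<Rightarrow> nat \<Rightarrow> real" where
  "stage_cost ppi p S0 A B Q R K t =
     (\<Sum>ws\<in>paths t. path_prob ppi p ws *
        trace ((Q$(last ws) + transpose (K$(last ws)) ** R$(last ws) ** K$(last ws))
               ** stm (gam A B K) ws ** S0 ** transpose (stm (gam A B K) ws)))"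

definition cost where
  "cost ppi p S0 A B Q R K = (\<Sum>t. stage_cost ppi p S0 A B Q R K t)"

definition Eop :: "('s::finite \<Rightarrow> 's \<Rightarrow> real) \<Rightarrow> real^'n^'m^'s \<Rightarrow> real^'n^'m^'s" where
  "Eop p V = (\<chi> i. \<Sum>j\<in>UNIV. p i j *\<^sub>R V$j)"

definition Lop :: "('s::finite \<Rightarrow> 's \<Rightarrow> real) \<Rightarrow> real^'d^'d^'s \<Rightarrow> real^'d^'d^'s \<Rightarrow> real^'d^'d^'s" where
  "Lop p G V = (\<chi> i. transpose (G$i) ** (Eop p V)$i ** G$i)"

definition Top :: "('s::finite \<Rightarrow> 's \<Rightarrow> real) \<Rightarrow> real^'d^'d^'s \<Rightarrow> real^'d^'d^'s \<Rightarrow> real^'d^'d^'s" where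
  "Top p G V = (\<chi> j. \<Sum>i\<in>UNIV. p i j *\<^sub>R (G$i ** V$i ** transpose (G$i)))"

text \<open>P^K: the solution of P_i = Q_i + K_i^T R_i K_i + Gamma_i^T E_i(P) Gamma_i
  (unique for K in Kset).\<close>
definition PK :: "('s::finite \<Rightarrow> 's \<Rightarrow> real) \<Rightarrow> real^'d^'d^'s \<Rightarrow> real^'k^'d^'s \<Rightarrow>
     real^'d^'d^'s \<Rightarrow> real^'k^'k^'s \<Rightarrow> real^'d^'k^'s \<Rightarrow> real^'d^'d^'s" where
  "PK p A B Q R K = (THE P. \<forall>i. P$i = Q$i + transpose (K$i) ** R$i ** K$i
       + transpose ((gam A B K)$i) ** (Eop p P)$i ** (gam A B K)$i)"

definition LK :: "('s::finite \<Rightarrow> 's \<Rightarrow> real) \<Rightarrow> real^'d^'d^'s \<Rightarrow> real^'k^'d^'s \<Rightarrow>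
     real^'d^'d^'s \<Rightarrow> real^'k^'k^'s \<Rightarrow> real^'d^'k^'s \<Rightarrow> real^'d^'k^'s" where
  "LK p A B Q R K = (let P = PK p A B Q R K in
     (\<chi> i. (R$i + transpose (B$i) ** (Eop p P)$i ** B$i) ** K$i
            - transpose (B$i) ** (Eop p P)$i ** A$i))"

text \<open>X(0)_i = E[x0 x0^T 1{w(0)=i}] = pi_i S0 (independence), and X^K = sum_t T^t(X(0)).\<close>
definition X0 :: "('s::finite \<Rightarrow> real) \<Rightarrow> real^'d^'d \<Rightarrow> real^'d^'d^'s" where
  "X0 ppi S0 = (\<chi> i. ppi i *\<^sub>R S0)"

definition XK where
  "XK ppi p S0 A B K = (\<Sum>t. (Top p (gam A B K) ^^ t) (X0 ppi S0))"

definition dPK where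
  "dPK p A B Q R K E = (\<Sum>t. (Lop p (gam A B K) ^^ t)
     (tmul (ttrans E) (LK p A B Q R K) + tmul (ttrans (LK p A B Q R K)) E))"

end

theory Submission
  imports Defs
begin


lemma matrix_add_rdistrib': "((A::real^'n::finite^'m::finite) + B) ** (C::real^'p::finite^'n) = A ** C + B ** C"
  by (simp add: matrix_matrix_mult_def vec_eq_iff sum.distrib distrib_right)

lemma mm_bilinear: "bilinear ((**) :: real^'n::finite^'m::finite \<Rightarrow> real^'p::finite^'n \<Rightarrow> real^'p^'m)"
  unfolding bilinear_def
  by (auto intro!: linearI simp: matrix_add_ldistrib matrix_add_rdistrib' matrix_scalar_ac scalar_matrix_assoc[symmetric])

lemma mm_bb: "bounded_bilinear ((**) :: real^'n::finite^'m::finite \<Rightarrow> real^'p::finite^'n \<Rightarrow> real^'p^'m)"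
  using mm_bilinear bilinear_conv_bounded_bilinear by blast

lemmas mm_add_left = bounded_bilinear.add_left[OF mm_bb]
lemmas mm_add_right = bounded_bilinear.add_right[OF mm_bb]
lemmas mm_diff_left = bounded_bilinear.diff_left[OF mm_bb]
lemmas mm_diff_right = bounded_bilinear.diff_right[OF mm_bb]
lemmas mm_minus_left = bounded_bilinear.minus_left[OF mm_bb]
lemmas mm_minus_right = bounded_bilinear.minus_right[OF mm_bb]
lemmas mm_scaleR_left = bounded_bilinear.scaleR_left[OF mm_bb]
lemmas mm_scaleR_right = bounded_bilinear.scaleR_right[OF mm_bb]
lemmas mm_sum_left = bounded_bilinear.sum_left[OF mm_bb]
lemmas mm_sum_right = bounded_bilinear.sum_right[OF mm_bb]
lemmas mm_zero_left = bounded_bilinear.zero_left[OF mm_bb]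
lemmas mm_zero_right = bounded_bilinear.zero_right[OF mm_bb]

lemmas mm_simps = mm_add_left mm_add_right mm_diff_left mm_diff_right mm_minus_left mm_minus_right
  mm_scaleR_left mm_scaleR_right mm_zero_left mm_zero_right

lemma transpose_add': "transpose (A + B) = transpose A + transpose (B::real^'n::finite^'m::finite)"
  by (simp add: transpose_def vec_eq_iff)
lemma transpose_diff': "transpose (A - B) = transpose A - transpose (B::real^'n::finite^'m::finite)"
  by (simp add: transpose_def vec_eq_iff)
lemma transpose_minus': "transpose (- A) = - transpose (A::real^'n::finite^'m::finite)"
  by (simp add: transpose_def vec_eq_iff)
lemma transpose_zero': "transpose (0::real^'n::finite^'m::finite) = 0"
  by (simp add: transpose_def vec_eq_iff)
lemma transpose_sum': "transpose (sum f S) = (\<Sum>i\<in>S. transpose (f i :: real^'n::finite^'m::finite))"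
  by (simp add: transpose_def vec_eq_iff)

lemmas tr_simps = transpose_add' transpose_diff' transpose_minus' transpose_zero' transpose_sum'
  transpose_scalar matrix_transpose_mul transpose_transpose

lemma trace_sum': "trace (sum f S) = (\<Sum>i\<in>S. trace (f i :: real^'n::finite^'n))"
  by (simp add: trace_def) (rule sum.swap)
lemma trace_scaleR': "trace (c *\<^sub>R (A :: real^'n::finite^'n)) = c * trace A"
  by (simp add: trace_def sum_distrib_left)

lemma inner_trace: "(A::real^'n::finite^'m::finite) \<bullet> B = trace (transpose A ** B)"
  by (simp add: inner_vec_def trace_def matrix_matrix_mult_def transpose_def) (rule sum.swap)

lemma inner_I1: "((A::real^'n::finite^'m::finite) ** (B::real^'p::finite^'n)) \<bullet> C = B \<bullet> (transpose A ** C)"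
  by (simp add: inner_trace matrix_transpose_mul matrix_mul_assoc)

lemma inner_I2: "((A::real^'n::finite^'m::finite) ** (B::real^'p::finite^'n)) \<bullet> C = A \<bullet> (C ** transpose B)"
proof -
  have "((A ** B) \<bullet> C) = trace ((transpose B ** transpose A) ** C)"
    by (simp add: inner_trace matrix_transpose_mul)
  also have "\<dots> = trace (transpose B ** (transpose A ** C))"
    by (simp add: matrix_mul_assoc)
  also have "\<dots> = trace ((transpose A ** C) ** transpose B)"
    by (rule trace_mul_sym)
  also have "\<dots> = trace (transpose A ** (C ** transpose B))"
    by (simp add: matrix_mul_assoc)
  also have "\<dots> = A \<bullet> (C ** transpose B)"
    by (simp add: inner_trace)
  finally show ?thesis .
qed

lemma inner_I3: "(A::real^'n::finite^'m::finite) \<bullet> B = transpose A \<bullet> transpose B"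
  by (simp add: inner_vec_def transpose_def) (rule sum.swap)

lemma inner_adj: "(V::real^'n::finite^'m::finite) \<bullet> ((G::real^'a::finite^'m) ** W ** transpose (H::real^'b::finite^'n))
    = (transpose G ** V ** H) \<bullet> W"
proof -
  have "V \<bullet> ((G ** W) ** transpose H) = ((G ** W) ** transpose H) \<bullet> V"
    by (rule inner_commute)
  also have "\<dots> = (G ** W) \<bullet> (V ** H)"
    by (simp add: inner_I2)
  also have "\<dots> = W \<bullet> (transpose G ** (V ** H))"
    by (rule inner_I1)
  also have "\<dots> = (transpose G ** V ** H) \<bullet> W"
    by (simp add: inner_commute matrix_mul_assoc)
  finally show ?thesis .
qed

lemma inner_J: "transpose X = X \<Longrightarrow> ((Z::real^'n::finite^'m::finite) ** X) \<bullet> (E::real^'n^'m)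
    = (transpose E ** Z) \<bullet> X"
proof -
  assume X: "transpose X = X"
  have "(Z ** X) \<bullet> E = Z \<bullet> (E ** transpose X)" by (rule inner_I2)
  also have "\<dots> = Z \<bullet> (E ** X)" using X by simp
  also have "\<dots> = (transpose E ** Z) \<bullet> X" by (simp add: inner_I1)
  finally show ?thesis .
qed



section \<open>Powers of bounded linear operators, Neumann series\<close>

definition bpow :: "('a::real_normed_vector \<Rightarrow>\<^sub>L 'a) \<Rightarrow> nat \<Rightarrow> ('a \<Rightarrow>\<^sub>L 'a)" where
  "bpow F n = ((\<lambda>G. F o\<^sub>L G) ^^ n) id_blinfun"

lemma bpow_0[simp]: "bpow F 0 = id_blinfun"
  by (simp add: bpow_def)

lemma bpow_Suc: "bpow F (Suc n) = F o\<^sub>L bpow F n"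
  by (simp add: bpow_def)

lemma bpow_apply: "blinfun_apply (bpow F n) = blinfun_apply F ^^ n"
  by (induction n) (auto simp: bpow_Suc fun_eq_iff)

lemma bpow_add: "bpow F (m + n) = bpow F m o\<^sub>L bpow F n"
  by (rule blinfun_eqI) (simp add: bpow_apply funpow_add)

lemma bpow_Suc': "bpow F (Suc n) = bpow F n o\<^sub>L F"
  by (rule blinfun_eqI) (simp add: bpow_apply funpow_Suc_right del: funpow.simps)

lemma bpow_mult: "bpow F (m * n) = bpow (bpow F m) n"
  by (rule blinfun_eqI) (simp add: bpow_apply funpow_mult)

lemma norm_bpow_le: "norm (bpow F n) \<le> norm F ^ n"
proof (induction n)
  case 0 then show ?case by (simp add: norm_blinfun_id_le)
next
  case (Suc n)
  have "norm (bpow F (Suc n)) \<le> norm F * norm (bpow F n)"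
    unfolding bpow_Suc by (rule norm_blinfun_compose)
  also have "\<dots> \<le> norm F * norm F ^ n" using Suc by (simp add: mult_left_mono)
  finally show ?case by simp
qed

lemma bpow_tendsto:
  fixes F :: "'b \<Rightarrow> ('a::real_normed_vector \<Rightarrow>\<^sub>L 'a)"
  assumes "(F \<longlongrightarrow> F0) net"
  shows "((\<lambda>u. bpow (F u) n) \<longlongrightarrow> bpow F0 n) net"
proof (induction n)
  case 0 then show ?case by simp
next
  case (Suc n)
  show ?case unfolding bpow_Suc
    by (rule bounded_bilinear.tendsto[OF bounded_bilinear_blinfun_compose assms Suc])
qed

lemma neumann_summable:
  fixes F :: "'a::real_normed_vector \<Rightarrow>\<^sub>L 'a"
  assumes c: "norm (bpow F N) < 1" and N: "0 < N"
  shows "summable (\<lambda>n. norm (bpow F n))"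
proof -
  define c where "c = norm (bpow F N)"
  define c' where "c' = (1 + c) / 2"
  define C where "C = (\<Sum>r<N. norm (bpow F r))"
  define d where "d = root N c'"
  have c0: "0 \<le> c" by (simp add: c_def)
  have c1: "c < 1" using c by (simp add: c_def)
  have c'0: "0 < c'" "c' < 1" "c \<le> c'" using c0 c1 by (auto simp: c'_def)
  have d0: "0 < d" "d < 1" using c'0 N by (auto simp: d_def)
  have dN: "d ^ N = c'" using c'0 N by (simp add: d_def)
  have bound: "norm (bpow F n) \<le> (C / d ^ N) * d ^ n" for n
  proof -
    define q where "q = n div N"
    define r where "r = n mod N"
    have n: "n = N * q + r" by (simp add: q_def r_def)
    have rN: "r < N" using N by (simp add: r_def)
    have "bpow F n = bpow F (N * q) o\<^sub>L bpow F r" by (simp add: n bpow_add)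
    then have a1: "norm (bpow F n) \<le> norm (bpow F (N*q)) * norm (bpow F r)"
      by (simp add: norm_blinfun_compose)
    have a2: "norm (bpow F (N*q)) \<le> c ^ q"
      unfolding bpow_mult c_def by (rule norm_bpow_le)
    have a3: "norm (bpow F r) \<le> C"
      unfolding C_def using rN by (intro member_le_sum) auto
    have 1: "norm (bpow F n) \<le> c ^ q * C"
      using a1 mult_mono[OF a2 a3] c0 by (meson norm_ge_zero order_trans zero_le_power)
    have "c ^ q \<le> c' ^ q" using c0 c'0 by (simp add: power_mono)
    also have "c' ^ q = d ^ (N * q)" by (simp add: dN power_mult)
    also have "d ^ (N * q) = d ^ (N * q + N) / d ^ N" using d0 by (simp add: power_add)
    also have "d ^ (N * q + N) \<le> d ^ n"
      using d0 rN n by (intro power_decreasing) auto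
    finally have 2: "c ^ q \<le> d ^ n / d ^ N" using d0 by (simp add: divide_right_mono)
    have C0: "0 \<le> C" by (simp add: C_def sum_nonneg)
    from 1 have "norm (bpow F n) \<le> (d ^ n / d ^ N) * C"
      using 2 C0 by (meson mult_right_mono order_trans)
    then show ?thesis by (simp add: field_simps)
  qed
  have "summable (\<lambda>n. (C / d ^ N) * d ^ n)"
    using d0 by (intro summable_mult summable_geometric) simp
  then show ?thesis
    by (rule summable_comparison_test[rotated]) (use bound in auto)
qed

lemma neumann:
  fixes F :: "'a::banach \<Rightarrow>\<^sub>L 'a"
  assumes c: "norm (bpow F N) < 1" and N: "0 < N"
  shows "bpow F sums (suminf (bpow F))"
    and "(id_blinfun - F) o\<^sub>L suminf (bpow F) = id_blinfun"
    and "suminf (bpow F) o\<^sub>L (id_blinfun - F) = id_blinfun"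
    and "\<And>x. (\<lambda>n. bpow F n x) sums (suminf (bpow F) x)"
proof -
  define S where "S = suminf (bpow F)"
  have sm: "summable (bpow F)"
    by (rule summable_norm_cancel[OF neumann_summable[OF c N]])
  then show sS: "bpow F sums (suminf (bpow F))" by (rule summable_sums)
  have "(\<lambda>n. F o\<^sub>L bpow F n) sums (F o\<^sub>L S)"
    unfolding S_def
    by (rule bounded_linear.sums[OF bounded_bilinear.bounded_linear_right[OF bounded_bilinear_blinfun_compose] sS])
  then have "(\<lambda>n. bpow F (Suc n)) sums (F o\<^sub>L S)" by (simp add: bpow_Suc)
  then have "bpow F sums ((F o\<^sub>L S) + id_blinfun)" by (simp add: sums_Suc_iff)
  then have e1: "S = (F o\<^sub>L S) + id_blinfun" using sS unfolding S_def by (metis sums_unique2)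
  have "(\<lambda>n. bpow F n o\<^sub>L F) sums (S o\<^sub>L F)"
    unfolding S_def
    by (rule bounded_linear.sums[OF bounded_bilinear.bounded_linear_left[OF bounded_bilinear_blinfun_compose] sS])
  then have "(\<lambda>n. bpow F (Suc n)) sums (S o\<^sub>L F)" by (simp add: bpow_Suc')
  then have "bpow F sums ((S o\<^sub>L F) + id_blinfun)" by (simp add: sums_Suc_iff)
  then have e2: "S = (S o\<^sub>L F) + id_blinfun" using sS unfolding S_def by (metis sums_unique2)
  show "(id_blinfun - F) o\<^sub>L suminf (bpow F) = id_blinfun"
    unfolding S_def[symmetric]
    by (rule blinfun_eqI) (metis (no_types, lifting) add_diff_cancel_left' blinfun.add_left blinfun.diff_left
        blinfun_apply_blinfun_compose blinfun_apply_id_blinfun e1)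
  show "suminf (bpow F) o\<^sub>L (id_blinfun - F) = id_blinfun"
    unfolding S_def[symmetric]
  proof (rule blinfun_eqI)
    fix x
    have "S x = S (F x) + x" using e2 by (metis blinfun.add_left blinfun_apply_blinfun_compose blinfun_apply_id_blinfun)
    then show "(S o\<^sub>L (id_blinfun - F)) x = id_blinfun x"
      by (simp add: blinfun.bilinear_simps)
  qed
  show "(\<lambda>n. bpow F n x) sums (suminf (bpow F) x)" for x
    by (rule bounded_linear.sums[OF blinfun.bounded_linear_left sS])
qed



section \<open>Resolvent derivative\<close>

lemma vector_derivative_quotient:
  fixes f :: "real \<Rightarrow> 'b::real_normed_vector"
  assumes "((\<lambda>y. (f y - f x) /\<^sub>R (y - x)) \<longlongrightarrow> D) (at x)"
  shows "(f has_vector_derivative D) (at x)"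
proof -
  have "((\<lambda>y. (f y - f x) /\<^sub>R (y - x) - D) \<longlongrightarrow> 0) (at x)"
    using assms by (simp add: LIM_zero)
  then have "((\<lambda>y. norm ((f y - f x) /\<^sub>R (y - x) - D)) \<longlongrightarrow> 0) (at x)"
    by (simp add: tendsto_norm_zero_iff)
  moreover have "\<forall>\<^sub>F y in at x. norm ((f y - f x) /\<^sub>R (y - x) - D) =
      norm ((f y - f x) - (y - x) *\<^sub>R D) / norm (y - x)"
  proof (rule eventually_at_topological[THEN iffD2], intro exI[of _ UNIV] conjI ballI impI, simp, simp)
    fix y :: real assume "y \<noteq> x"
    then have "y - x \<noteq> 0" by simp
    then have "(f y - f x) - (y - x) *\<^sub>R D = (y - x) *\<^sub>R ((f y - f x) /\<^sub>R (y - x) - D)"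
      by (simp add: scaleR_diff_right)
    then show "norm ((f y - f x) /\<^sub>R (y - x) - D) = norm ((f y - f x) - (y - x) *\<^sub>R D) / norm (y - x)"
      using \<open>y \<noteq> x\<close> by simp
  qed
  ultimately have "((\<lambda>y. norm ((f y - f x) - (y - x) *\<^sub>R D) / norm (y - x)) \<longlongrightarrow> 0) (at x)"
    by (rule Lim_transform_eventually)
  then show ?thesis
    unfolding has_vector_derivative_def has_derivative_iff_norm
    by (auto intro: bounded_linear_scaleR_left)
qed

lemma resolvent_deriv:
  fixes F R :: "real \<Rightarrow> ('a::real_normed_vector \<Rightarrow>\<^sub>L 'a)"
  assumes U: "open U" "u0 \<in> U"
    and RL: "\<And>u. u \<in> U \<Longrightarrow> R u o\<^sub>L (id_blinfun - F u) = id_blinfun"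
    and RR: "\<And>u. u \<in> U \<Longrightarrow> (id_blinfun - F u) o\<^sub>L R u = id_blinfun"
    and dF: "(F has_vector_derivative F') (at u0)"
  shows "(R has_vector_derivative (R u0 o\<^sub>L F' o\<^sub>L R u0)) (at u0)"
proof -
  have ident: "R u - R u0 = R u o\<^sub>L (F u - F u0) o\<^sub>L R u0" if "u \<in> U" for u
  proof (rule blinfun_eqI)
    fix x
    have a: "R u (x' - F u x') = x'" for x'
      using RL[OF that] by (metis blinfun.diff_left blinfun_apply_blinfun_compose blinfun_apply_id_blinfun)
    have b: "R u0 x - F u0 (R u0 x) = x"
      using RR[OF U(2)] by (metis blinfun.diff_left blinfun_apply_blinfun_compose blinfun_apply_id_blinfun)
    have "(R u o\<^sub>L (F u - F u0) o\<^sub>L R u0) x = R u (F u (R u0 x) - F u0 (R u0 x))"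
      by (simp add: blinfun.bilinear_simps)
    also have "F u (R u0 x) - F u0 (R u0 x) = (R u0 x - F u0 (R u0 x)) - (R u0 x - F u (R u0 x))"
      by simp
    also have "R u \<dots> = R u x - R u0 x"
      by (simp only: b a blinfun.diff_right[of "R u" x "R u0 x - F u (R u0 x)"])
    finally show "(R u - R u0) x = (R u o\<^sub>L (F u - F u0) o\<^sub>L R u0) x"
      by (simp add: blinfun.bilinear_simps)
  qed
  have contF: "(F \<longlongrightarrow> F u0) (at u0)"
    using has_vector_derivative_continuous[OF dF] by (simp add: continuous_at)
  define c where "c = norm (R u0)"
  have ev1: "\<forall>\<^sub>F u in at u0. norm (F u - F u0) * c \<le> 1/2"
  proof -
    have "((\<lambda>u. norm (F u - F u0) * c) \<longlongrightarrow> norm (F u0 - F u0) * c) (at u0)"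
      by (intro tendsto_intros contF)
    then have "((\<lambda>u. norm (F u - F u0) * c) \<longlongrightarrow> 0) (at u0)" by simp
    then have "\<forall>\<^sub>F u in at u0. norm (F u - F u0) * c < 1/2"
      by (rule order_tendstoD(2)) simp
    then show ?thesis by (rule eventually_mono) simp
  qed
  have evU: "\<forall>\<^sub>F u in at u0. u \<in> U"
    using U by (rule eventually_at_in_open')
  have cmp: "norm (R u o\<^sub>L (F u - F u0) o\<^sub>L R u0) \<le> norm (R u) * norm (F u - F u0) * c" for u
  proof -
    have "norm (R u o\<^sub>L (F u - F u0) o\<^sub>L R u0) \<le> norm (R u o\<^sub>L (F u - F u0)) * norm (R u0)"
      by (rule norm_blinfun_compose)
    also have "\<dots> \<le> (norm (R u) * norm (F u - F u0)) * norm (R u0)"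
      by (intro mult_right_mono norm_blinfun_compose norm_ge_zero)
    finally show ?thesis by (simp add: c_def)
  qed
  have ev2: "\<forall>\<^sub>F u in at u0. norm (R u) \<le> 2 * c"
    using ev1 evU
  proof eventually_elim
    case (elim u)
    have e: "R u = R u0 + (R u o\<^sub>L (F u - F u0) o\<^sub>L R u0)" by (simp add: ident[OF elim(2), symmetric])
    have "norm (R u0 + (R u o\<^sub>L (F u - F u0) o\<^sub>L R u0)) \<le> norm (R u0) + norm (R u o\<^sub>L (F u - F u0) o\<^sub>L R u0)"
      by (rule norm_triangle_ineq)
    then have "norm (R u) \<le> c + norm (R u o\<^sub>L (F u - F u0) o\<^sub>L R u0)"
      unfolding e[symmetric] c_def .
    also have "\<dots> \<le> c + norm (R u) * norm (F u - F u0) * c"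
      using cmp[of u] by simp
    also have "\<dots> \<le> c + norm (R u) * (1/2)"
      using mult_left_mono[OF elim(1) norm_ge_zero[of "R u"]] by (simp add: mult.assoc)
    finally show ?case by simp
  qed
  have contR: "(R \<longlongrightarrow> R u0) (at u0)"
  proof -
    have "((\<lambda>u. R u - R u0) \<longlongrightarrow> 0) (at u0)"
    proof (rule Lim_null_comparison)
      show "\<forall>\<^sub>F u in at u0. norm (R u - R u0) \<le> 2 * c * c * norm (F u - F u0)"
        using ev2 evU
      proof eventually_elim
        case (elim u)
        have "norm (R u - R u0) \<le> norm (R u) * norm (F u - F u0) * c"
          unfolding ident[OF elim(2)] by (rule cmp)
        also have "\<dots> \<le> 2 * c * norm (F u - F u0) * c"
          using elim(1) by (intro mult_right_mono) (auto simp: c_def)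
        finally show ?case by (simp add: ac_simps)
      qed
      have "((\<lambda>u. 2 * c * c * norm (F u - F u0)) \<longlongrightarrow> 2 * c * c * norm (F u0 - F u0)) (at u0)"
        by (intro tendsto_intros contF)
      then show "((\<lambda>u. 2 * c * c * norm (F u - F u0)) \<longlongrightarrow> 0) (at u0)" by simp
    qed
    then show ?thesis by (simp add: LIM_zero_iff)
  qed
  have dq: "((\<lambda>y. (F y - F u0) /\<^sub>R (y - u0)) \<longlongrightarrow> F') (at u0)"
  proof -
    have "((\<lambda>y. norm ((F y - F u0) - (y - u0) *\<^sub>R F') / norm (y - u0)) \<longlongrightarrow> 0) (at u0)"
      using dF unfolding has_vector_derivative_def has_derivative_iff_norm by simp
    then have "((\<lambda>y. norm ((F y - F u0) /\<^sub>R (y - u0) - F')) \<longlongrightarrow> 0) (at u0)"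
    proof (rule Lim_transform_eventually)
      show "\<forall>\<^sub>F y in at u0. norm ((F y - F u0) - (y - u0) *\<^sub>R F') / norm (y - u0) =
          norm ((F y - F u0) /\<^sub>R (y - u0) - F')"
      proof (rule eventually_at_topological[THEN iffD2], intro exI[of _ UNIV] conjI ballI impI, simp, simp)
        fix y :: real assume "y \<noteq> u0"
        then have "y - u0 \<noteq> 0" by simp
        then have "(F y - F u0) - (y - u0) *\<^sub>R F' = (y - u0) *\<^sub>R ((F y - F u0) /\<^sub>R (y - u0) - F')"
          by (simp add: scaleR_diff_right)
        then show "norm ((F y - F u0) - (y - u0) *\<^sub>R F') / norm (y - u0) = norm ((F y - F u0) /\<^sub>R (y - u0) - F')"
          using \<open>y \<noteq> u0\<close> by simp
      qed
    qed
    then show ?thesis by (simp add: tendsto_norm_zero_iff LIM_zero_iff)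
  qed
  show ?thesis
  proof (rule vector_derivative_quotient)
    have lim: "((\<lambda>y. R y o\<^sub>L ((F y - F u0) /\<^sub>R (y - u0)) o\<^sub>L R u0) \<longlongrightarrow> R u0 o\<^sub>L F' o\<^sub>L R u0) (at u0)"
      by (intro bounded_bilinear.tendsto[OF bounded_bilinear_blinfun_compose] contR dq tendsto_const)
    show "((\<lambda>y. (R y - R u0) /\<^sub>R (y - u0)) \<longlongrightarrow> R u0 o\<^sub>L F' o\<^sub>L R u0) (at u0)"
    proof (rule Lim_transform_eventually[OF lim])
      show "\<forall>\<^sub>F y in at u0. R y o\<^sub>L ((F y - F u0) /\<^sub>R (y - u0)) o\<^sub>L R u0 = (R y - R u0) /\<^sub>R (y - u0)"
        using evU
      proof eventually_elim
        case (elim y)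
        show ?case unfolding ident[OF elim]
          by (simp add: bounded_bilinear.scaleR_left[OF bounded_bilinear_blinfun_compose]
              bounded_bilinear.scaleR_right[OF bounded_bilinear_blinfun_compose])
      qed
    qed
  qed
qed




lemma vec_eqI': "(\<And>i. x$i = y$i) \<Longrightarrow> x = y"
  by (simp add: vec_eq_iff)

definition sw :: "('s::finite \<Rightarrow> 's \<Rightarrow> real) \<Rightarrow> real^'d::finite^'d^'s \<Rightarrow> real^'d^'d^'s \<Rightarrow> real^'d^'d^'s \<Rightarrow> real^'d^'d^'s" where
  "sw p G H W = (\<chi> j. \<Sum>i\<in>UNIV. p i j *\<^sub>R (G$i ** W$i ** transpose (H$i)))"

definition swa :: "('s::finite \<Rightarrow> 's \<Rightarrow> real) \<Rightarrow> real^'d::finite^'d^'s \<Rightarrow> real^'d^'d^'s \<Rightarrow> real^'d^'d^'s \<Rightarrow> real^'d^'d^'s" where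
  "swa p G H V = (\<chi> i. transpose (G$i) ** (Eop p V)$i ** H$i)"

lemma Top_sw: "Top p G = sw p G G" by (simp add: fun_eq_iff Top_def sw_def)
lemma Lop_swa: "Lop p G = swa p G G" by (simp add: fun_eq_iff Lop_def swa_def)

lemma Eop_comp: "(Eop p V)$i = (\<Sum>j\<in>UNIV. p i j *\<^sub>R V$j)" by (simp add: Eop_def)

lemma tinner_sum: "(V::real^'n::finite^'m::finite^'s::finite) \<bullet> W = (\<Sum>i\<in>UNIV. V$i \<bullet> W$i)"
  by (rule inner_vec_def)

lemma sw_linear: "linear (sw p G H)"
  by (intro linearI vec_eqI') (simp_all add: sw_def mm_simps scaleR_add_right sum.distrib scaleR_sum_right ac_simps)

lemma swa_linear: "linear (swa p G H)"
  by (intro linearI vec_eqI') (simp_all add: swa_def Eop_def mm_simps mm_sum_left mm_sum_right scaleR_add_right sum.distrib scaleR_sum_right ac_simps)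

lemma sw_bl: "bounded_linear (sw p G H)"
  using sw_linear linear_conv_bounded_linear by blast
lemma swa_bl: "bounded_linear (swa p G H)"
  using swa_linear linear_conv_bounded_linear by blast

lemma sw_adj: "V \<bullet> sw p G H W = swa p G H V \<bullet> W"
proof -
  have "V \<bullet> sw p G H W = (\<Sum>j\<in>UNIV. \<Sum>i\<in>UNIV. p i j * (V$j \<bullet> (G$i ** W$i ** transpose (H$i))))"
    by (simp add: sw_def tinner_sum inner_sum_right)
  also have "\<dots> = (\<Sum>j\<in>UNIV. \<Sum>i\<in>UNIV. p i j * ((transpose (G$i) ** V$j ** H$i) \<bullet> W$i))"
    by (simp add: inner_adj)
  also have "\<dots> = (\<Sum>i\<in>UNIV. \<Sum>j\<in>UNIV. p i j * ((transpose (G$i) ** V$j ** H$i) \<bullet> W$i))"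
    by (rule sum.swap)
  also have "\<dots> = swa p G H V \<bullet> W"
    by (simp add: swa_def Eop_def tinner_sum mm_sum_left mm_sum_right mm_scaleR_left mm_scaleR_right inner_sum_left)
  finally show ?thesis .
qed

lemma ttrans_comp[simp]: "ttrans V $ i = transpose (V$i)" by (simp add: ttrans_def)
lemma ttrans_linear: "linear (ttrans :: real^'n::finite^'m::finite^'s::finite \<Rightarrow> _)"
  by (intro linearI vec_eqI') (simp_all add: tr_simps)
lemma ttrans_ttrans[simp]: "ttrans (ttrans V) = (V :: real^'n::finite^'m::finite^'s::finite)"
  by (rule vec_eqI') simp
lemma sw_ttrans: "sw p G G (ttrans W) = ttrans (sw p G G W)"
  by (rule vec_eqI') (simp add: sw_def tr_simps matrix_mul_assoc)
lemma swa_ttrans: "swa p G G (ttrans V) = ttrans (swa p G G V)"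
  by (rule vec_eqI') (simp add: swa_def Eop_def tr_simps matrix_mul_assoc)

section \<open>Paths\<close>

lemma finite_paths[simp]: "finite (paths t :: 's::finite list set)"
proof -
  have "finite {xs. set xs \<subseteq> (UNIV::'s set) \<and> length xs = Suc t}"
    by (rule finite_lists_length_eq) simp
  then show ?thesis by (simp add: paths_def)
qed

lemma paths_ne: "ws \<in> paths t \<Longrightarrow> ws \<noteq> []" by (auto simp: paths_def)

lemma paths_0: "paths 0 = (\<lambda>w. [w]) ` UNIV"
  by (auto simp: paths_def length_Suc_conv)

lemma paths_Suc: "paths (Suc t) = (\<lambda>(w, ws). w # ws) ` (UNIV \<times> paths t)"
  by (auto simp: paths_def length_Suc_conv image_iff)

lemma chain_Cons: "ws \<noteq> [] \<Longrightarrow> chain_prob p (w # ws) = p w (hd ws) * chain_prob p ws"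
  by (cases ws) auto

lemma stm_Cons: "ws \<noteq> [] \<Longrightarrow> stm G (w # ws) = stm G ws ** G$w"
  by (cases ws) auto

lemma chain_nonneg: "(\<forall>i j. p i j \<ge> 0) \<Longrightarrow> chain_prob p ws \<ge> 0"
  by (induction p ws rule: chain_prob.induct) auto

lemma Top_path:
  fixes G :: "real^'d::finite^'d^'s::finite"
  shows "((Top p G ^^ t) Y) $ j = (\<Sum>ws\<in>paths t. if last ws = j then chain_prob p ws *\<^sub>R (stm G ws ** Y$(hd ws) ** transpose (stm G ws)) else 0)"
proof (induction t arbitrary: Y)
  case 0
  have "(\<Sum>ws\<in>paths 0. if last ws = j then chain_prob p ws *\<^sub>R (stm G ws ** Y$(hd ws) ** transpose (stm G ws)) else 0)
      = (\<Sum>w\<in>UNIV. if w = j then Y$w else 0)"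
    unfolding paths_0 by (subst sum.reindex) (auto simp: inj_on_def)
  then show ?case by simp
next
  case (Suc t)
  define f where "f ws = (if last ws = j then chain_prob p ws *\<^sub>R (stm G ws ** Y$(hd ws) ** transpose (stm G ws)) else 0)" for ws
  have "((Top p G ^^ Suc t) Y) $ j = ((Top p G ^^ t) (Top p G Y)) $ j"
    by (simp add: funpow_Suc_right del: funpow.simps)
  also have "\<dots> = (\<Sum>ws\<in>paths t. if last ws = j then chain_prob p ws *\<^sub>R (stm G ws ** (Top p G Y)$(hd ws) ** transpose (stm G ws)) else 0)"
    by (rule Suc.IH)
  also have "\<dots> = (\<Sum>ws\<in>paths t. \<Sum>w\<in>UNIV. f (w # ws))"
  proof (rule sum.cong[OF refl])
    fix ws :: "'s list" assume ws: "ws \<in> paths t"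
    then have ne: "ws \<noteq> []" by (rule paths_ne)
    have "stm G ws ** (Top p G Y)$(hd ws) ** transpose (stm G ws)
        = (\<Sum>w\<in>UNIV. p w (hd ws) *\<^sub>R (stm G ws ** (G$w ** Y$w ** transpose (G$w)) ** transpose (stm G ws)))"
      by (simp add: Top_def mm_sum_left mm_sum_right mm_scaleR_left mm_scaleR_right)
    also have "\<dots> = (\<Sum>w\<in>UNIV. p w (hd ws) *\<^sub>R (stm G (w # ws) ** Y$w ** transpose (stm G (w # ws))))"
      by (simp add: stm_Cons[OF ne] matrix_transpose_mul matrix_mul_assoc)
    finally have eq: "stm G ws ** (Top p G Y)$(hd ws) ** transpose (stm G ws) =
        (\<Sum>w\<in>UNIV. p w (hd ws) *\<^sub>R (stm G (w # ws) ** Y$w ** transpose (stm G (w # ws))))" .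
    show "(if last ws = j then chain_prob p ws *\<^sub>R (stm G ws ** (Top p G Y)$(hd ws) ** transpose (stm G ws)) else 0)
        = (\<Sum>w\<in>UNIV. f (w # ws))"
      unfolding eq f_def using ne by (auto simp: chain_Cons scaleR_sum_right ac_simps)
  qed
  also have "\<dots> = (\<Sum>w\<in>UNIV. \<Sum>ws\<in>paths t. f (w # ws))" by (rule sum.swap)
  also have "\<dots> = (\<Sum>(w, ws)\<in>UNIV \<times> paths t. f (w # ws))" by (simp add: sum.cartesian_product)
  also have "\<dots> = (\<Sum>ws\<in>paths (Suc t). f ws)"
    unfolding paths_Suc by (subst sum.reindex) (auto simp: inj_on_def case_prod_beta intro!: sum.cong)
  finally show ?case by (simp add: f_def)
qed

lemma X0_comp: "X0 ppi S0 $ i = ppi i *\<^sub>R S0" by (simp add: X0_def)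

lemma inner_if0: "x \<bullet> (if c then y else 0) = (if c then x \<bullet> y else 0)" by simp

lemma inner_Top_X0:
  fixes G :: "real^'d::finite^'d^'s::finite"
  shows "Mt \<bullet> ((Top p G ^^ t) (X0 ppi S0)) = (\<Sum>ws\<in>paths t. path_prob ppi p ws * trace (transpose (Mt$(last ws)) ** stm G ws ** S0 ** transpose (stm G ws)))"
proof -
  have "Mt \<bullet> ((Top p G ^^ t) (X0 ppi S0)) = (\<Sum>j\<in>UNIV. \<Sum>ws\<in>paths t. if last ws = j then
      Mt$j \<bullet> (chain_prob p ws *\<^sub>R (stm G ws ** (X0 ppi S0 $ hd ws) ** transpose (stm G ws))) else 0)"
    by (simp add: tinner_sum Top_path inner_sum_right inner_if0)
  also have "\<dots> = (\<Sum>j\<in>UNIV. \<Sum>ws\<in>paths t. if last ws = j then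
      Mt$j \<bullet> (chain_prob p ws *\<^sub>R (stm G ws ** (ppi (hd ws) *\<^sub>R S0) ** transpose (stm G ws))) else 0)"
    by (simp only: X0_comp)
  also have "\<dots> = (\<Sum>ws\<in>paths t. \<Sum>j\<in>UNIV. if last ws = j then
      Mt$j \<bullet> (chain_prob p ws *\<^sub>R (stm G ws ** (ppi (hd ws) *\<^sub>R S0) ** transpose (stm G ws))) else 0)"
    by (rule sum.swap)
  also have "\<dots> = (\<Sum>ws\<in>paths t. path_prob ppi p ws * trace (transpose (Mt$(last ws)) ** stm G ws ** S0 ** transpose (stm G ws)))"
    by (simp add: inner_trace path_prob_def mm_scaleR_left mm_scaleR_right trace_scaleR' matrix_mul_assoc ac_simps)
  finally show ?thesis .
qed




definition outer :: "real^'n::finite \<Rightarrow> real^'n \<Rightarrow> real^'n^'n" where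
  "outer x y = (\<chi> a b. x$a * y$b)"

lemma stm_outer: "(M::real^'n::finite^'n) ** outer x y ** transpose M = outer (M *v x) (M *v y)"
proof (rule vec_eqI', rule vec_eqI')
  fix a b
  have "(M ** outer x y ** transpose M) $ a $ b = (\<Sum>c\<in>UNIV. (\<Sum>k\<in>UNIV. M$a$k * (x$k * y$c)) * M$b$c)"
    by (simp add: matrix_matrix_mult_def outer_def transpose_def)
  also have "\<dots> = (\<Sum>c\<in>UNIV. \<Sum>k\<in>UNIV. (M$a$k * x$k) * (M$b$c * y$c))"
    by (simp add: sum_distrib_right sum_distrib_left ac_simps)
  also have "\<dots> = (\<Sum>k\<in>UNIV. M$a$k * x$k) * (\<Sum>c\<in>UNIV. M$b$c * y$c)"
    by (simp add: sum_product) (rule sum.swap)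
  also have "\<dots> = outer (M *v x) (M *v y) $ a $ b"
    by (simp add: outer_def matrix_vector_mult_def)
  finally show "(M ** outer x y ** transpose M) $ a $ b = outer (M *v x) (M *v y) $ a $ b" .
qed

lemma norm_outer: "norm (outer x y) = norm x * norm (y::real^'n::finite)"
proof -
  have r: "outer x y $ a = x$a *\<^sub>R y" for a by (rule vec_eqI') (simp add: outer_def)
  have "norm (outer x y) = L2_set (\<lambda>a. norm y * \<bar>x$a\<bar>) UNIV"
    by (simp add: norm_vec_def[of "outer x y"] r mult.commute)
  also have "\<dots> = norm y * L2_set (\<lambda>a. \<bar>x$a\<bar>) UNIV"
    by (rule L2_set_right_distrib[symmetric]) simp
  also have "L2_set (\<lambda>a. \<bar>x$a\<bar>) UNIV = norm x"
    by (simp add: norm_vec_def[of x])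
  finally show ?thesis by simp
qed

lemma norm_le_sum_comp: "norm (v::('a::real_normed_vector)^'n::finite) \<le> (\<Sum>j\<in>UNIV. norm (v$j))"
  unfolding norm_vec_def by (rule L2_set_le_sum) simp

lemma axis_comp: "axis j0 v $ i = (if i = j0 then v else 0)"
  by (simp add: axis_def)

lemma ms_T_zero:
  fixes G :: "real^'d::finite^'d^'s::finite"
  assumes st: "stochastic_matrix p" and ms: "ms_stable p G"
  shows "((\<lambda>t. (Top p G ^^ t) (axis j0 (outer x y))) \<longlongrightarrow> 0) sequentially"
proof -
  define mu where "mu = (\<lambda>i::'s. if i = j0 then 1 else (0::real))"
  have pv: "prob_vector mu" by (simp add: prob_vector_def mu_def)
  have p0: "\<forall>i j. p i j \<ge> 0" using st by (simp add: stochastic_matrix_def)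
  define g where "g t = (\<Sum>ws\<in>paths t. path_prob mu p ws * (norm (stm G ws *v x))\<^sup>2)
      + (\<Sum>ws\<in>paths t. path_prob mu p ws * (norm (stm G ws *v y))\<^sup>2)" for t
  have g0: "(g \<longlongrightarrow> 0) sequentially"
  proof -
    have "((\<lambda>t. (\<Sum>ws\<in>paths t. path_prob mu p ws * (norm (stm G ws *v x))\<^sup>2)) \<longlongrightarrow> 0) sequentially"
      using ms pv unfolding ms_stable_def by blast
    moreover have "((\<lambda>t. (\<Sum>ws\<in>paths t. path_prob mu p ws * (norm (stm G ws *v y))\<^sup>2)) \<longlongrightarrow> 0) sequentially"
      using ms pv unfolding ms_stable_def by blast
    ultimately show ?thesis unfolding g_def using tendsto_add by fastforce
  qed
  have pp0: "path_prob mu p ws \<ge> 0" for ws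
    using chain_nonneg[OF p0] by (simp add: path_prob_def mu_def)
  show ?thesis
  proof (rule Lim_null_comparison[OF _ g0], rule always_eventually, rule allI)
    fix t
    let ?Y = "(Top p G ^^ t) (axis j0 (outer x y))"
    define h where "h ws = path_prob mu p ws * (norm (stm G ws *v x) * norm (stm G ws *v y))" for ws
    have comp: "norm (?Y $ j) \<le> (\<Sum>ws\<in>paths t. if last ws = j then h ws else 0)" for j
    proof -
      have "norm (?Y $ j) \<le> (\<Sum>ws\<in>paths t. norm (if last ws = j then chain_prob p ws *\<^sub>R
          (stm G ws ** (axis j0 (outer x y))$(hd ws) ** transpose (stm G ws)) else 0))"
        unfolding Top_path by (rule norm_sum)
      also have "\<dots> = (\<Sum>ws\<in>paths t. if last ws = j then h ws else 0)"
      proof (rule sum.cong[OF refl])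
        fix ws :: "'s list"
        show "norm (if last ws = j then chain_prob p ws *\<^sub>R
          (stm G ws ** (axis j0 (outer x y))$(hd ws) ** transpose (stm G ws)) else 0) =
          (if last ws = j then h ws else 0)"
          using chain_nonneg[OF p0, of ws]
          by (auto simp: axis_comp h_def path_prob_def mu_def stm_outer norm_outer)
      qed
      finally show ?thesis .
    qed
    have "norm ?Y \<le> (\<Sum>j\<in>UNIV. norm (?Y $ j))" by (rule norm_le_sum_comp)
    also have "\<dots> \<le> (\<Sum>j\<in>UNIV. \<Sum>ws\<in>paths t. if last ws = j then h ws else 0)"
      by (rule sum_mono) (rule comp)
    also have "\<dots> = (\<Sum>ws\<in>paths t. h ws)"
      by (subst sum.swap) simp
    also have "\<dots> \<le> g t"
    proof -
      have "h ws \<le> path_prob mu p ws * (norm (stm G ws *v x))\<^sup>2 + path_prob mu p ws * (norm (stm G ws *v y))\<^sup>2" for ws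
      proof -
        have "norm (stm G ws *v x) * norm (stm G ws *v y) \<le> (norm (stm G ws *v x))\<^sup>2 + (norm (stm G ws *v y))\<^sup>2"
          using sum_squares_bound[of "norm (stm G ws *v x)" "norm (stm G ws *v y)"]
            mult_nonneg_nonneg[OF norm_ge_zero norm_ge_zero, of "stm G ws *v x" "stm G ws *v y"]
          by linarith
        then have "h ws \<le> path_prob mu p ws * ((norm (stm G ws *v x))\<^sup>2 + (norm (stm G ws *v y))\<^sup>2)"
          unfolding h_def using pp0[of ws] by (rule mult_left_mono)
        then show ?thesis by (simp add: distrib_left)
      qed
      then show ?thesis unfolding g_def sum.distrib[symmetric] by (rule sum_mono)
    qed
    finally show "norm ?Y \<le> g t" .
  qed
qed

lemma Basis_tuple:
  assumes "b \<in> (Basis :: (real^'d::finite^'d^'s::finite) set)"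
  shows "\<exists>j0 a c. b = axis j0 (outer (axis a 1) (axis c (1::real)))"
proof -
  from assms obtain j0 u where u: "u \<in> (Basis :: (real^'d^'d) set)" and b: "b = axis j0 u"
    unfolding Basis_vec_def by auto
  from u obtain a v where v: "v \<in> (Basis :: (real^'d) set)" and uv: "u = axis a v"
    unfolding Basis_vec_def by auto
  from v obtain c where vc: "v = axis c (1::real)"
    unfolding Basis_vec_def by auto
  have "axis a (axis c (1::real)) = outer (axis a 1) (axis c 1)"
    by (intro vec_eqI') (simp add: axis_def outer_def)
  then have "b = axis j0 (outer (axis a 1) (axis c 1))" using b uv vc by simp
  then show ?thesis by blast
qed

lemma Top_bl: "bounded_linear (Top p G)"
  unfolding Top_sw by (rule sw_bl)
lemma Lop_bl: "bounded_linear (Lop p G)"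
  unfolding Lop_swa by (rule swa_bl)

lemma T_bpow_zero:
  fixes G :: "real^'d::finite^'d^'s::finite"
  assumes st: "stochastic_matrix p" and ms: "ms_stable p G"
  shows "(bpow (Blinfun (Top p G)) \<longlongrightarrow> 0) sequentially"
proof (rule tendsto_componentwise1)
  fix b :: "real^'d^'d^'s" assume "b \<in> Basis"
  then obtain j0 a c where b: "b = axis j0 (outer (axis a 1) (axis c 1))" by (auto dest: Basis_tuple)
  show "((\<lambda>n. bpow (Blinfun (Top p G)) n b) \<longlongrightarrow> blinfun_apply 0 b) sequentially"
    using ms_T_zero[OF st ms, of j0 "axis a 1" "axis c 1"]
    by (simp add: b bpow_apply bounded_linear_Blinfun_apply[OF Top_bl])
qed

lemma pow_adj: "V \<bullet> ((Top p G ^^ n) W) = ((Lop p G ^^ n) V) \<bullet> W"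
proof (induction n arbitrary: V)
  case 0 then show ?case by simp
next
  case (Suc n)
  have a: "V \<bullet> Top p G Z = Lop p G V \<bullet> Z" for V Z by (simp add: Top_sw Lop_swa sw_adj)
  have "V \<bullet> ((Top p G ^^ Suc n) W) = Lop p G V \<bullet> ((Top p G ^^ n) W)" by (simp add: a)
  also have "\<dots> = ((Lop p G ^^ n) (Lop p G V)) \<bullet> W" by (rule Suc.IH)
  finally show ?case by (simp add: funpow_Suc_right del: funpow.simps)
qed

lemma L_bpow_le: "norm (bpow (Blinfun (Lop p G)) n) \<le> norm (bpow (Blinfun (Top p G)) n)"
proof (rule norm_blinfun_bound)
  show "0 \<le> norm (bpow (Blinfun (Top p G)) n)" by simp
  fix V
  let ?T = "bpow (Blinfun (Top p G)) n"
  let ?L = "bpow (Blinfun (Lop p G)) n"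
  have LV: "?L V = (Lop p G ^^ n) V" by (simp add: bpow_apply bounded_linear_Blinfun_apply[OF Lop_bl])
  have TV: "?T W = (Top p G ^^ n) W" for W by (simp add: bpow_apply bounded_linear_Blinfun_apply[OF Top_bl])
  have "(norm (?L V))\<^sup>2 = ?L V \<bullet> ?L V" by (rule power2_norm_eq_inner)
  also have "\<dots> = V \<bullet> ?T (?L V)" unfolding TV by (simp add: LV pow_adj)
  also have "\<dots> \<le> norm V * norm (?T (?L V))" by (rule norm_cauchy_schwarz)
  also have "\<dots> \<le> norm V * (norm ?T * norm (?L V))" by (intro mult_left_mono norm_blinfun) simp
  finally have *: "(norm (?L V))\<^sup>2 \<le> norm ?T * norm V * norm (?L V)" by (simp add: ac_simps)
  show "norm (?L V) \<le> norm ?T * norm V"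
  proof (cases "norm (?L V) = 0")
    case True then show ?thesis by simp
  next
    case False
    then have "0 < norm (?L V)" by simp
    with * show ?thesis by (simp add: power2_eq_square mult_le_cancel_right)
  qed
qed




lemma tmul_comp[simp]: "tmul V S $ i = V$i ** S$i" by (simp add: tmul_def)

lemma tinner_inner: "tinner V S = V \<bullet> S"
  by (simp add: tinner_def tinner_sum inner_trace)

lemma gam_shift: "gam A B (K + u *\<^sub>R E) = gam A B K - u *\<^sub>R tmul B E"
  by (rule vec_eqI') (simp add: gam_def mm_simps algebra_simps)

lemma mat_shift:
  "((G::real^'n::finite^'n) - u *\<^sub>R H) ** W ** transpose (G - u *\<^sub>R H) =
    G ** W ** transpose G + u *\<^sub>R (- (H ** W ** transpose G + G ** W ** transpose H)) + u\<^sup>2 *\<^sub>R (H ** W ** transpose H)"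
  by (simp add: mm_simps tr_simps algebra_simps power2_eq_square)

lemma sw_shift:
  "sw p (G - u *\<^sub>R H) (G - u *\<^sub>R H) W = sw p G G W + u *\<^sub>R (- (sw p H G W + sw p G H W)) + u\<^sup>2 *\<^sub>R sw p H H W"
  by (rule vec_eqI') (simp add: sw_def mat_shift algebra_simps sum.distrib sum_negf sum_subtractf
      scaleR_sum_right)

lemma Mc_shift:
  "Q + transpose ((K::real^'d::finite^'k::finite) + u *\<^sub>R E) ** Rm ** (K + u *\<^sub>R E) =
   (Q + transpose K ** Rm ** K) + u *\<^sub>R (transpose E ** Rm ** K + transpose K ** Rm ** E) + u\<^sup>2 *\<^sub>R (transpose E ** Rm ** E)"
  by (simp add: tr_simps mm_simps algebra_simps power2_eq_square)

lemma resolvent_commute: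
  fixes F S :: "'a::real_normed_vector \<Rightarrow>\<^sub>L 'a"
  assumes "S o\<^sub>L (id_blinfun - F) = id_blinfun" "(id_blinfun - F) o\<^sub>L S = id_blinfun"
    and "linear C" and "\<And>y. C (F y) = F (C y)"
  shows "C (S y) = S (C y)"
proof -
  have a: "S (z - F z) = z" for z
    using assms(1) by (metis blinfun.diff_left blinfun_apply_blinfun_compose blinfun_apply_id_blinfun)
  have b: "S y - F (S y) = y"
    using assms(2) by (metis blinfun.diff_left blinfun_apply_blinfun_compose blinfun_apply_id_blinfun)
  have "S (C y) = S (C (S y - F (S y)))" by (simp only: b)
  also have "C (S y - F (S y)) = C (S y) - F (C (S y))"
    using assms(3,4) by (simp add: linear_diff)
  also have "S \<dots> = C (S y)" by (rule a)
  finally show ?thesis by simp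
qed

lemma resolvent_unique:
  fixes F S :: "'a::real_normed_vector \<Rightarrow>\<^sub>L 'a"
  assumes "S o\<^sub>L (id_blinfun - F) = id_blinfun"
  shows "x - F x = y \<Longrightarrow> x = S y"
  using assms by (metis blinfun.diff_left blinfun_apply_blinfun_compose blinfun_apply_id_blinfun)

lemma resolvent_eq:
  fixes F S :: "'a::real_normed_vector \<Rightarrow>\<^sub>L 'a"
  assumes "(id_blinfun - F) o\<^sub>L S = id_blinfun"
  shows "S y - F (S y) = y"
  using assms by (metis blinfun.diff_left blinfun_apply_blinfun_compose blinfun_apply_id_blinfun)

lemma resolvent_dual:
  fixes T L S SL :: "'a::real_inner \<Rightarrow>\<^sub>L 'a"
  assumes adj: "\<And>V W. V \<bullet> T W = L V \<bullet> W"
    and S: "(id_blinfun - T) o\<^sub>L S = id_blinfun"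
    and SL: "(id_blinfun - L) o\<^sub>L SL = id_blinfun"
  shows "M \<bullet> S Y = SL M \<bullet> Y"
proof -
  have "M \<bullet> S Y = (SL M - L (SL M)) \<bullet> S Y" by (simp only: resolvent_eq[OF SL])
  also have "\<dots> = SL M \<bullet> S Y - SL M \<bullet> T (S Y)" by (simp add: inner_diff_left adj)
  also have "\<dots> = SL M \<bullet> (S Y - T (S Y))" by (simp add: inner_diff_right)
  also have "\<dots> = SL M \<bullet> Y" by (simp only: resolvent_eq[OF S])
  finally show ?thesis .
qed

lemma posdef_sym: "posdef M \<Longrightarrow> transpose M = M" by (simp add: posdef_def)

lemma Eop_sym: "ttrans P = P \<Longrightarrow> transpose (Eop p P $ i) = Eop p P $ i"
  by (simp add: Eop_comp tr_simps) (metis ttrans_comp)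

lemma sym_comp: "ttrans P = P \<Longrightarrow> transpose (P $ i) = P $ i"
  by (metis ttrans_comp)




theorem lemma2:
  fixes A :: "real^'d::finite^'d^'s::finite" and B :: "real^'k::finite^'d^'s"
    and Q :: "real^'d^'d^'s" and R :: "real^'k^'k^'s"
    and K E :: "real^'d^'k^'s"
    and p :: "'s \<Rightarrow> 's \<Rightarrow> real" and ppi :: "'s \<Rightarrow> real" and S0 :: "real^'d^'d"
  assumes st: "stochastic_matrix p"
    and "prob_vector ppi" and "\<forall>i. ppi i > 0"
    and S0pd: "posdef S0"
    and "Kset p A B \<noteq> {}"
    and Qpd: "\<forall>i. posdef (Q$i)" and Rpd: "\<forall>i. posdef (R$i)"
    and KK: "K \<in> Kset p A B"
  shows "\<exists>g. (\<forall>\<^sub>F s in nhds 0.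
              ((\<lambda>s. cost ppi p S0 A B Q R (K + s *\<^sub>R E)) has_real_derivative g s) (at s))
           \<and> (g has_real_derivative
                2 * tinner (tmul (tmul (\<chi> i. R$i + transpose (B$i) ** (Eop p (PK p A B Q R K))$i ** B$i) E)
                                  (XK ppi p S0 A B K)) E
              - 4 * tinner (tmul (tmul (tmul (ttrans B) (Eop p (dPK p A B Q R K E))) (gam A B K))
                                  (XK ppi p S0 A B K)) E) (at 0)"
proof -
  define G where "G = gam A B K"
  define H where "H = tmul B E"
  define T0 where "T0 = Blinfun (sw p G G)"
  define T1 where "T1 = Blinfun (\<lambda>W. - (sw p H G W + sw p G H W))"
  define T2 where "T2 = Blinfun (sw p H H)"
  define F where "F = (\<lambda>u::real. T0 + u *\<^sub>R T1 + u\<^sup>2 *\<^sub>R T2)"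
  define F' where "F' = (\<lambda>u::real. T1 + (2 * u) *\<^sub>R T2)"
  define M0 where "M0 = (\<chi> j. Q$j + transpose (K$j) ** R$j ** K$j)"
  define M1 where "M1 = (\<chi> j. transpose (E$j) ** R$j ** K$j + transpose (K$j) ** R$j ** E$j)"
  define M2 where "M2 = (\<chi> j. transpose (E$j) ** R$j ** E$j)"
  define Mc where "Mc = (\<lambda>u::real. M0 + u *\<^sub>R M1 + u\<^sup>2 *\<^sub>R M2)"
  define Lb where "Lb = Blinfun (Lop p G)"
  define Y0 where "Y0 = X0 ppi S0"

  have blT1: "bounded_linear (\<lambda>W. - (sw p H G W + sw p G H W))"
    by (intro bounded_linear_minus bounded_linear_add sw_bl)
  have T0a: "blinfun_apply T0 = sw p G G" unfolding T0_def by (rule bounded_linear_Blinfun_apply[OF sw_bl])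
  have T1a: "blinfun_apply T1 = (\<lambda>W. - (sw p H G W + sw p G H W))"
    unfolding T1_def by (rule bounded_linear_Blinfun_apply[OF blT1])
  have T2a: "blinfun_apply T2 = sw p H H" unfolding T2_def by (rule bounded_linear_Blinfun_apply[OF sw_bl])
  have Lba: "blinfun_apply Lb = Lop p G" unfolding Lb_def by (rule bounded_linear_Blinfun_apply[OF Lop_bl])
  have Fa: "blinfun_apply (F u) = Top p (gam A B (K + u *\<^sub>R E))" for u
    by (rule ext) (simp add: F_def blinfun.bilinear_simps T0a T1a T2a Top_sw gam_shift G_def[symmetric] H_def[symmetric] sw_shift)
  have T0G: "T0 = Blinfun (Top p G)" by (simp add: T0_def Top_sw)
  have F0: "F 0 = T0" by (simp add: F_def)
  have ms: "ms_stable p G" using KK by (simp add: Kset_def G_def)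
  have Tz: "(bpow T0 \<longlonglongrightarrow> 0)" unfolding T0G by (rule T_bpow_zero[OF st ms])
  obtain N where N: "0 < N" "norm (bpow T0 N) < 1/2"
  proof -
    have "((\<lambda>n. norm (bpow T0 n)) \<longlongrightarrow> 0) sequentially" using Tz by (simp add: tendsto_norm_zero_iff)
    then have "\<forall>\<^sub>F n in sequentially. norm (bpow T0 n) < 1/2" by (rule order_tendstoD(2)) simp
    then obtain N0 where "\<forall>n\<ge>N0. norm (bpow T0 n) < 1/2" by (auto simp: eventually_sequentially)
    then show ?thesis using that[of "Suc N0"] by simp
  qed
  have "norm (bpow Lb N) \<le> norm (bpow T0 N)" unfolding Lb_def T0G by (rule L_bpow_le)
  then have LN: "norm (bpow Lb N) < 1" using N(2) by linarith
  have Fc: "(F \<longlongrightarrow> F 0) (at 0)" unfolding F_def by (intro tendsto_intros)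
  have ev: "\<forall>\<^sub>F u in nhds 0. norm (bpow (F u) N) < 1"
  proof -
    have "((\<lambda>u. norm (bpow (F u) N)) \<longlongrightarrow> norm (bpow (F 0) N)) (at 0)"
      by (intro tendsto_norm bpow_tendsto Fc)
    then have "\<forall>\<^sub>F u in at 0. norm (bpow (F u) N) < 1"
      by (rule order_tendstoD(2)) (use N F0 in simp)
    then show ?thesis using N F0 by (simp add: eventually_nhds_conv_at)
  qed
  then obtain dd where dd: "dd > 0" "\<And>u. dist u 0 < dd \<Longrightarrow> norm (bpow (F u) N) < 1"
    by (auto simp: eventually_nhds_metric)
  define U where "U = ball (0::real) dd"
  have U: "open U" "0 \<in> U" using dd by (auto simp: U_def)
  have FU: "norm (bpow (F u) N) < 1" if "u \<in> U" for u using dd(2) that by (simp add: U_def dist_commute)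

  define Rs where "Rs = (\<lambda>u. suminf (bpow (F u)))"
  have RsL: "Rs u o\<^sub>L (id_blinfun - F u) = id_blinfun" if "u \<in> U" for u
    unfolding Rs_def by (rule neumann(3)[OF FU[OF that] N(1)])
  have RsR: "(id_blinfun - F u) o\<^sub>L Rs u = id_blinfun" if "u \<in> U" for u
    unfolding Rs_def by (rule neumann(2)[OF FU[OF that] N(1)])
  have Rsums: "(\<lambda>n. bpow (F u) n x) sums (Rs u x)" if "u \<in> U" for u x
    unfolding Rs_def by (rule neumann(4)[OF FU[OF that] N(1)])
  define RL where "RL = suminf (bpow Lb)"
  have RLL: "RL o\<^sub>L (id_blinfun - Lb) = id_blinfun"
    unfolding RL_def by (rule neumann(3)[OF LN N(1)])
  have RLR: "(id_blinfun - Lb) o\<^sub>L RL = id_blinfun"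
    unfolding RL_def by (rule neumann(2)[OF LN N(1)])
  have RLsums: "(\<lambda>n. bpow Lb n x) sums (RL x)" for x
    unfolding RL_def by (rule neumann(4)[OF LN N(1)])

  have dF: "(F has_vector_derivative F' u) (at u)" for u
    unfolding F_def F'_def by (auto intro!: derivative_eq_intros)
  have dF': "(F' has_vector_derivative 2 *\<^sub>R T2) (at u)" for u
    unfolding F'_def by (auto intro!: derivative_eq_intros)
  have dRs: "(Rs has_vector_derivative (Rs u o\<^sub>L F' u o\<^sub>L Rs u)) (at u)" if "u \<in> U" for u
    by (rule resolvent_deriv[OF U(1) that RsL RsR dF])
  define X where "X = (\<lambda>u. Rs u Y0)"
  have dX: "(X has_vector_derivative Rs u (F' u (X u))) (at u)" if "u \<in> U" for u
  proof -
    have "((\<lambda>u. Rs u Y0) has_vector_derivative (Rs u o\<^sub>L F' u o\<^sub>L Rs u) Y0) (at u)"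
      by (rule bounded_linear.has_vector_derivative[OF blinfun.bounded_linear_left dRs[OF that]])
    then show ?thesis by (simp add: X_def)
  qed
  have dMc: "(Mc has_vector_derivative (M1 + (2 * u) *\<^sub>R M2)) (at u)" for u
    unfolding Mc_def by (auto intro!: derivative_eq_intros)
  have dM': "((\<lambda>u. M1 + (2 * u) *\<^sub>R M2) has_vector_derivative (2 *\<^sub>R M2)) (at u)" for u
    by (auto intro!: derivative_eq_intros)

  have symQ: "transpose (Q$j) = Q$j" for j using Qpd posdef_sym by blast
  have symR: "transpose (R$j) = R$j" for j using Rpd posdef_sym by blast
  have Mc_comp: "(\<chi> j. Q$j + transpose ((K + u *\<^sub>R E)$j) ** R$j ** (K + u *\<^sub>R E)$j) = Mc u" for u
    by (rule vec_eqI') (simp add: Mc_def M0_def M1_def M2_def Mc_shift)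
  have Mc_sym: "transpose (Mc u $ j) = Mc u $ j" for u j
    by (simp add: Mc_def M0_def M1_def M2_def tr_simps symQ symR matrix_mul_assoc algebra_simps)
  have stage: "stage_cost ppi p S0 A B Q R (K + u *\<^sub>R E) t = Mc u \<bullet> bpow (F u) t Y0" for u t
  proof -
    have "stage_cost ppi p S0 A B Q R (K + u *\<^sub>R E) t = Mc u \<bullet> ((Top p (gam A B (K + u *\<^sub>R E)) ^^ t) Y0)"
      unfolding Y0_def inner_Top_X0 stage_cost_def
      by (simp only: Mc_sym) (simp add: Mc_comp[symmetric])
    also have "\<dots> = Mc u \<bullet> bpow (F u) t Y0" by (simp add: bpow_apply Fa)
    finally show ?thesis .
  qed
  have cost_eq: "cost ppi p S0 A B Q R (K + u *\<^sub>R E) = Mc u \<bullet> X u" if "u \<in> U" for u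
  proof -
    have "(\<lambda>t. Mc u \<bullet> bpow (F u) t Y0) sums (Mc u \<bullet> Rs u Y0)"
      by (rule bounded_linear.sums[OF bounded_linear_inner_right Rsums[OF that]])
    then have "(\<lambda>t. stage_cost ppi p S0 A B Q R (K + u *\<^sub>R E) t) sums (Mc u \<bullet> X u)"
      by (simp add: stage X_def)
    then show ?thesis unfolding cost_def by (rule sums_unique[symmetric])
  qed

  define g where "g = (\<lambda>u. Mc u \<bullet> Rs u (F' u (X u)) + (M1 + (2 * u) *\<^sub>R M2) \<bullet> X u)"
  have Dg: "((\<lambda>s. cost ppi p S0 A B Q R (K + s *\<^sub>R E)) has_real_derivative g u) (at u)" if "u \<in> U" for u
  proof -
    have "((\<lambda>s. Mc s \<bullet> X s) has_vector_derivative (Mc u \<bullet> Rs u (F' u (X u)) + (M1 + (2 * u) *\<^sub>R M2) \<bullet> X u)) (at u)"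
      by (rule bounded_bilinear.has_vector_derivative[OF bounded_bilinear_inner dMc dX[OF that]])
    then have "((\<lambda>s. Mc s \<bullet> X s) has_real_derivative g u) (at u)"
      by (simp add: g_def has_real_derivative_iff_has_vector_derivative)
    then show ?thesis
      by (rule has_field_derivative_transform_within_open[OF _ U(1) that]) (simp add: cost_eq)
  qed
  have evg: "\<forall>\<^sub>F s in nhds 0. ((\<lambda>s. cost ppi p S0 A B Q R (K + s *\<^sub>R E)) has_real_derivative g s) (at s)"
    unfolding eventually_nhds using U Dg by blast

  have dWf: "((\<lambda>u. F' u (X u)) has_vector_derivative (F' 0 (Rs 0 (F' 0 (X 0))) + (2 *\<^sub>R T2) (X 0))) (at 0)"
    by (rule bounded_bilinear.has_vector_derivative[OF bounded_bilinear_blinfun_apply dF' dX[OF U(2)]])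
  define DXd where "DXd = Rs 0 (F' 0 (Rs 0 (F' 0 (X 0))) + (2 *\<^sub>R T2) (X 0)) + (Rs 0 o\<^sub>L F' 0 o\<^sub>L Rs 0) (F' 0 (X 0))"
  have dXd: "((\<lambda>u. Rs u (F' u (X u))) has_vector_derivative DXd) (at 0)"
    unfolding DXd_def by (rule bounded_bilinear.has_vector_derivative[OF bounded_bilinear_blinfun_apply dRs[OF U(2)] dWf])
  define Hr where "Hr = (Mc 0 \<bullet> DXd + (M1 + (2 * 0) *\<^sub>R M2) \<bullet> Rs 0 (F' 0 (X 0)))
      + ((M1 + (2 * 0) *\<^sub>R M2) \<bullet> Rs 0 (F' 0 (X 0)) + (2 *\<^sub>R M2) \<bullet> X 0)"
  have dg: "(g has_vector_derivative Hr) (at 0)"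
    unfolding Hr_def g_def
    by (rule has_vector_derivative_add[OF bounded_bilinear.has_vector_derivative[OF bounded_bilinear_inner dMc dXd]
          bounded_bilinear.has_vector_derivative[OF bounded_bilinear_inner dM' dX[OF U(2)]]])

  have F0a: "blinfun_apply (F 0) = sw p G G" by (simp add: F0 T0a)
  have adjT: "V \<bullet> F 0 W = Lb V \<bullet> W" for V W by (simp add: F0a Lba Lop_swa sw_adj)
  have dual: "M \<bullet> Rs 0 Y = RL M \<bullet> Y" for M Y
    by (rule resolvent_dual[OF adjT RsR[OF U(2)] RLR])
  define P where "P = RL M0"
  have Peq: "P - Lop p G P = M0" unfolding P_def using resolvent_eq[OF RLR, of M0] by (simp add: Lba)
  have PKeq: "PK p A B Q R K = P"
    unfolding PK_def
  proof (rule the_equality)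
    show "\<forall>i. P $ i = Q $ i + transpose (K $ i) ** R $ i ** K $ i + transpose (gam A B K $ i) ** Eop p P $ i ** gam A B K $ i"
    proof
      fix i
      have "P $ i = M0 $ i + Lop p G P $ i" using Peq by (metis diff_add_cancel vector_add_component)
      then show "P $ i = Q $ i + transpose (K $ i) ** R $ i ** K $ i + transpose (gam A B K $ i) ** Eop p P $ i ** gam A B K $ i"
        by (simp add: M0_def Lop_def G_def)
    qed
  next
    fix P2 assume P2: "\<forall>i. P2 $ i = Q $ i + transpose (K $ i) ** R $ i ** K $ i + transpose (gam A B K $ i) ** Eop p P2 $ i ** gam A B K $ i"
    have "P2 - Lb P2 = M0"
      by (rule vec_eqI') (simp add: Lba Lop_def M0_def G_def P2[rule_format])
    then show "P2 = P" unfolding P_def by (rule resolvent_unique[OF RLL])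
  qed
  define Xv where "Xv = X 0"
  have XKeq: "XK ppi p S0 A B K = Xv"
  proof -
    have "(\<lambda>t. (Top p (gam A B K) ^^ t) (X0 ppi S0)) sums Xv"
      using Rsums[OF U(2), of Y0] by (simp add: Xv_def X_def bpow_apply Fa Y0_def)
    then show ?thesis unfolding XK_def by (rule sums_unique[symmetric])
  qed
  define LKv where "LKv = LK p A B Q R K"
  define Dv where "Dv = tmul (ttrans E) LKv + tmul (ttrans LKv) E"
  define P' where "P' = RL Dv"
  have dPKeq: "dPK p A B Q R K E = P'"
  proof -
    have "(\<lambda>t. (Lop p (gam A B K) ^^ t) Dv) sums P'"
      using RLsums[of Dv] by (simp add: P'_def bpow_apply Lba G_def)
    then show ?thesis unfolding dPK_def LKv_def[symmetric] Dv_def[symmetric] by (rule sums_unique[symmetric])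
  qed

  have ttr_lin: "linear (ttrans :: real^'d^'d^'s \<Rightarrow> real^'d^'d^'s)" by (rule ttrans_linear)
  have Y0sym: "ttrans Y0 = Y0"
    by (rule vec_eqI') (simp add: Y0_def X0_comp tr_simps posdef_sym[OF S0pd])
  have Xsym: "ttrans Xv = Xv"
  proof -
    have "ttrans (Rs 0 Y0) = Rs 0 (ttrans Y0)"
      by (rule resolvent_commute[OF RsL[OF U(2)] RsR[OF U(2)] ttr_lin]) (simp add: F0a sw_ttrans)
    then show ?thesis by (simp add: Xv_def X_def Y0sym)
  qed
  have Lcomm: "ttrans (Lb y) = Lb (ttrans y)" for y by (simp add: Lba Lop_swa swa_ttrans)
  have M0sym: "ttrans M0 = M0" using Mc_sym[of 0] by (intro vec_eqI') (simp add: Mc_def)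
  have Psym: "ttrans P = P"
  proof -
    have "ttrans (RL M0) = RL (ttrans M0)"
      by (rule resolvent_commute[OF RLL RLR ttr_lin]) (simp add: Lcomm)
    then show ?thesis by (simp add: P_def M0sym)
  qed
  have Dsym: "ttrans Dv = Dv" by (rule vec_eqI') (simp add: Dv_def tr_simps add.commute)
  have P'sym: "ttrans P' = P'"
  proof -
    have "ttrans (RL Dv) = RL (ttrans Dv)"
      by (rule resolvent_commute[OF RLL RLR ttr_lin]) (simp add: Lcomm)
    then show ?thesis by (simp add: P'_def Dsym)
  qed
  have EPsym: "transpose (Eop p P $ i) = Eop p P $ i" for i by (rule Eop_sym[OF Psym])
  have EP'sym: "transpose (Eop p P' $ i) = Eop p P' $ i" for i by (rule Eop_sym[OF P'sym])
  have Xisym: "transpose (Xv $ i) = Xv $ i" for i by (rule sym_comp[OF Xsym])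

  have Deq: "Dv = M1 - swa p H G P - swa p G H P"
    by (rule vec_eqI') (simp add: Dv_def LKv_def LK_def PKeq Let_def M1_def swa_def H_def G_def gam_def
        mm_simps tr_simps matrix_mul_assoc symR EPsym algebra_simps)

  have eqA: "tmul (tmul (\<chi> i. R$i + transpose (B$i) ** (Eop p P)$i ** B$i) E) Xv \<bullet> E = M2 \<bullet> Xv + swa p H H P \<bullet> Xv"
  proof -
    have "tmul (tmul (\<chi> i. R$i + transpose (B$i) ** (Eop p P)$i ** B$i) E) Xv \<bullet> E
        = (\<Sum>i\<in>UNIV. ((R$i + transpose (B$i) ** (Eop p P)$i ** B$i) ** E$i ** Xv$i) \<bullet> E$i)"
      by (simp add: tinner_sum)
    also have "\<dots> = (\<Sum>i\<in>UNIV. (transpose (E$i) ** ((R$i + transpose (B$i) ** (Eop p P)$i ** B$i) ** E$i)) \<bullet> Xv$i)"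
      by (rule sum.cong[OF refl]) (rule inner_J[OF Xisym])
    also have "\<dots> = (\<Sum>i\<in>UNIV. (M2$i + swa p H H P $ i) \<bullet> Xv$i)"
      by (rule sum.cong[OF refl]) (simp add: M2_def swa_def H_def mm_simps tr_simps matrix_mul_assoc)
    also have "\<dots> = M2 \<bullet> Xv + swa p H H P \<bullet> Xv"
      by (simp add: tinner_sum inner_add_left sum.distrib)
    finally show ?thesis .
  qed
  have eqB: "tmul (tmul (tmul (ttrans B) (Eop p P')) G) Xv \<bullet> E = swa p H G P' \<bullet> Xv"
  proof -
    have "tmul (tmul (tmul (ttrans B) (Eop p P')) G) Xv \<bullet> E
        = (\<Sum>i\<in>UNIV. (transpose (B$i) ** Eop p P' $ i ** G$i ** Xv$i) \<bullet> E$i)"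
      by (simp add: tinner_sum)
    also have "\<dots> = (\<Sum>i\<in>UNIV. (transpose (E$i) ** (transpose (B$i) ** Eop p P' $ i ** G$i)) \<bullet> Xv$i)"
      by (rule sum.cong[OF refl]) (rule inner_J[OF Xisym])
    also have "\<dots> = swa p H G P' \<bullet> Xv"
      by (simp add: tinner_sum swa_def H_def tr_simps matrix_mul_assoc)
    finally show ?thesis .
  qed
  have eqC: "swa p G H P' \<bullet> Xv = swa p H G P' \<bullet> Xv"
  proof -
    have "swa p G H P' $ i \<bullet> Xv $ i = swa p H G P' $ i \<bullet> Xv $ i" for i
    proof -
      have "swa p G H P' $ i \<bullet> Xv $ i = transpose (swa p G H P' $ i) \<bullet> transpose (Xv $ i)"
        by (rule inner_I3)
      also have "\<dots> = swa p H G P' $ i \<bullet> Xv $ i"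
        by (simp add: swa_def Xisym EP'sym tr_simps matrix_mul_assoc)
      finally show ?thesis .
    qed
    then show ?thesis by (simp add: tinner_sum)
  qed

  have F'0: "F' 0 = T1" by (simp add: F'_def)
  have Mc0: "Mc 0 = M0" by (simp add: Mc_def)
  define Z where "Z = Rs 0 (T1 Xv)"
  have T1inner: "V \<bullet> T1 W = - (swa p H G V \<bullet> W + swa p G H V \<bullet> W)" for V W
    by (simp add: T1a inner_minus_right inner_add_right inner_diff_right sw_adj)
  have T2inner: "V \<bullet> T2 W = swa p H H V \<bullet> W" for V W
    by (simp add: T2a sw_adj)
  have Hr1: "Hr = M0 \<bullet> Rs 0 (T1 Z + (2 *\<^sub>R T2) Xv) + M0 \<bullet> Rs 0 (T1 Z) + 2 * (M1 \<bullet> Z) + 2 * (M2 \<bullet> Xv)"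
    by (simp add: Hr_def DXd_def F'0 Mc0 Z_def Xv_def inner_add_right)
  also have "\<dots> = 2 * (M1 \<bullet> Z + P \<bullet> T1 Z) + 2 * (P \<bullet> T2 Xv) + 2 * (M2 \<bullet> Xv)"
    by (simp add: dual P_def[symmetric] blinfun.bilinear_simps inner_add_right)
  also have "M1 \<bullet> Z + P \<bullet> T1 Z = Dv \<bullet> Z"
    by (simp add: Deq T1inner inner_diff_left)
  also have "Dv \<bullet> Z = P' \<bullet> T1 Xv"
    by (simp add: Z_def dual P'_def)
  finally have Hr2: "Hr = 2 * (M2 \<bullet> Xv + swa p H H P \<bullet> Xv) - 2 * (swa p H G P' \<bullet> Xv + swa p G H P' \<bullet> Xv)"
    by (simp add: T1inner T2inner algebra_simps)
  have Heq: "Hr = 2 * tinner (tmul (tmul (\<chi> i. R$i + transpose (B$i) ** (Eop p (PK p A B Q R K))$i ** B$i) E)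
                                  (XK ppi p S0 A B K)) E
              - 4 * tinner (tmul (tmul (tmul (ttrans B) (Eop p (dPK p A B Q R K E))) (gam A B K))
                                  (XK ppi p S0 A B K)) E"
    unfolding PKeq XKeq dPKeq tinner_inner G_def[symmetric] eqA eqB Hr2 eqC by simp
  have "(g has_real_derivative Hr) (at 0)"
    using dg by (simp add: has_real_derivative_iff_has_vector_derivative)
  then show ?thesis using evg Heq by auto
qed


end
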